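(* In the finite element setting described in the context, let each element mass matrix $M_e$ be symmetric positive definite, fix an integer $0<r<m$ and a constant $\alpha>0$, and for each element define $$\overline{M}_e=M_e+\alpha\,V_eV_e^T,\qquad V_e=M_eU_{e,2},$$ where $U_{e,2}\in\mathbb{R}^{m\times r}$ has as columns $M_e$-orthonormal eigenvectors of $(K_e,M_e)$ associated with its $r$ largest eigenvalues $\lambda_{m-r+1}(K_e,M_e),\dots,\lambda_m(K_e,M_e)$. Let $M=\sum_eL_e^TM_eL_e$ and $\overline{M}=\sum_eL_e^T\overline{M}_eL_e$. Then for all $i=1,\dots,n$, $$1\le\frac{\omega_i}{\overline{\omega}_i}\le\sqrt{1+\alpha},$$ where $\omega_i=\sqrt{\lambda_i(K,M)}$ and $\overline{\omega}_i=\sqrt{\lambda_i(K,\overline{M})}$.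
   Context: Finite element setting: there are $n$ global degrees of freedom and $N$ elements, each with $m$ local degrees of freedom. For each element $e$, $L_e\in\mathbb{R}^{m\times n}$ satisfies $L_e^T=[\mathbf{e}_{i_1},\dots,\mathbf{e}_{i_m}]$ for distinct indices $i_1,\dots,i_m$ (columns of $I_n$), and every global index appears for at least one element. Element matrices are assembled as $A=\sum_{e=1}^N L_e^TA_eL_e$. The global stiffness matrix is $K=\sum_e L_e^TK_eL_e$ with each $K_e$ symmetric positive semidefinite, and $K$ is assumed symmetric positive definite. Generalized eigenvalues $\lambda_1(A,B)\le\dots\le\lambda_k(A,B)$ of a pair ($A$ symmetric, $B$ symmetric positive definite) are numbered in ascending order; "$M_e$-orthonormal" means $U_{e,2}^TM_eU_{e,2}=I_r$. *)

theory Defs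
  imports "Jordan_Normal_Form.Determinant" "HOL-Computational_Algebra.Polynomial"
    "HOL-Library.Multiset"
begin

definition sym_mat :: "real mat \<Rightarrow> bool" where
  "sym_mat A \<longleftrightarrow> transpose_mat A = A"

definition psd_mat :: "nat \<Rightarrow> real mat \<Rightarrow> bool" where
  "psd_mat k A \<longleftrightarrow> A \<in> carrier_mat k k \<and> sym_mat A \<and>
     (\<forall>x \<in> carrier_vec k. x \<bullet> (A *\<^sub>v x) \<ge> 0)"

definition pd_mat :: "nat \<Rightarrow> real mat \<Rightarrow> bool" where
  "pd_mat k A \<longleftrightarrow> A \<in> carrier_mat k k \<and> sym_mat A \<and>
     (\<forall>x \<in> carrier_vec k. x \<noteq> 0\<^sub>v k \<longrightarrow> x \<bullet> (A *\<^sub>v x) > 0)"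

definition gen_char_poly :: "real mat \<Rightarrow> real mat \<Rightarrow> real poly" where
  "gen_char_poly A B = det (map_mat (\<lambda>a. [:a:]) A - map_mat (\<lambda>b. [:0, b:]) B)"

text \<open>k-th generalized eigenvalue (1-based, ascending, with multiplicity).\<close>
definition gen_eig :: "real mat \<Rightarrow> real mat \<Rightarrow> nat \<Rightarrow> real" where
  "gen_eig A B k = sorted_list_of_multiset (proots (gen_char_poly A B)) ! (k - 1)"

definition restr_mat :: "nat \<Rightarrow> nat \<Rightarrow> (nat \<Rightarrow> nat) \<Rightarrow> real mat" where
  "restr_mat m n idx = mat m n (\<lambda>(a, b). if b = idx a then 1 else 0)"

definition assemble :: "nat \<Rightarrow> nat \<Rightarrow> (nat \<Rightarrow> real mat) \<Rightarrow> (nat \<Rightarrow> real mat) \<Rightarrow> real mat" where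
  "assemble n N L A = mat n n (\<lambda>(i, j). \<Sum>e<N. (transpose_mat (L e) * A e * L e) $$ (i, j))"

end

theory Submission
  imports Defs "Jordan_Normal_Form.Char_Poly"
begin
lemma real_eigen_exists:
  fixes S :: "real mat"
  assumes S: "S \<in> carrier_mat n n" and sym: "sym_mat S" and n: "n > 0"
  shows "\<exists>l v. v \<in> carrier_vec n \<and> v \<noteq> 0\<^sub>v n \<and> S *\<^sub>v v = l \<cdot>\<^sub>v v"
proof -
  let ?cS = "map_mat complex_of_real S"
  have cS: "?cS \<in> carrier_mat n n" using S by simp
  from char_poly_factorized[OF cS] obtain as where
    cp: "char_poly ?cS = (\<Prod>a\<leftarrow>as. [:- a, 1:])" and len: "length as = n" by blast
  obtain a where a: "a \<in> set as" using len n by (cases as) auto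
  have "poly (char_poly ?cS) a = 0" unfolding cp using a
    by (induct as) (auto simp: poly_prod_list)
  hence "eigenvalue ?cS a" using eigenvalue_root_char_poly[OF cS] by simp
  then obtain v where ev: "eigenvector ?cS v a" unfolding eigenvalue_def by blast
  hence v: "v \<in> carrier_vec n" "v \<noteq> 0\<^sub>v n" and Sv: "?cS *\<^sub>v v = a \<cdot>\<^sub>v v"
    unfolding eigenvector_def using cS by auto
  define s where "s = (\<Sum>i<n. cnj (v$i) * (?cS *\<^sub>v v)$i)"
  have s1: "s = (\<Sum>i<n. \<Sum>j<n. cnj (v$i) * complex_of_real (S$$(i,j)) * v$j)"
    unfolding s_def using S v
    by (auto simp: mult_mat_vec_def scalar_prod_def sum_distrib_left mult.assoc intro!: sum.cong)
  have "cnj s = (\<Sum>i<n. \<Sum>j<n. v$i * complex_of_real (S$$(i,j)) * cnj (v$j))"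
    unfolding s1 by (simp add: cnj_sum)
  also have "\<dots> = (\<Sum>j<n. \<Sum>i<n. v$i * complex_of_real (S$$(i,j)) * cnj (v$j))"
    by (rule sum.swap)
  also have "\<dots> = s" unfolding s1
  proof (intro sum.cong refl)
    fix i j assume "i \<in> {..<n}" "j \<in> {..<n}"
    hence "S$$(j,i) = S$$(i,j)" using sym S unfolding sym_mat_def
      by (metis carrier_matD index_transpose_mat(1) lessThan_iff)
    thus "v $ j * complex_of_real (S $$ (j, i)) * cnj (v $ i) =
      cnj (v $ i) * complex_of_real (S $$ (i, j)) * v $ j" by simp
  qed
  finally have "cnj s = s" .
  hence ims: "Im s = 0" using complex_eq_iff[of "cnj s" s] by simp
  define w where "w = (\<Sum>i<n. (cmod (v$i))^2)"
  have s2: "s = a * complex_of_real w"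
  proof -
    have "\<And>z. cnj z * z = complex_of_real ((cmod z)^2)"
      by (metis complex_norm_square mult.commute)
    thus ?thesis unfolding s_def w_def Sv using v
      by (auto simp: sum_distrib_left intro!: sum.cong)
  qed
  obtain i where i: "i < n" "v $ i \<noteq> 0" using v by (metis vec_eq_iff carrier_vecD index_zero_vec(1) index_zero_vec(2))
  have "w > 0" unfolding w_def
    by (rule sum_pos2[of _ i]) (use i in auto)
  with ims s2 have "Im a = 0" by simp
  hence a_real: "a = complex_of_real (Re a)" by (simp add: complex_eq_iff)
  have "complex_of_real (poly (char_poly S) (Re a)) = poly (char_poly ?cS) a"
    using a_real of_real_hom.char_poly_hom[OF S] by (metis of_real_hom.poly_map_poly)
  also have "\<dots> = 0" by fact
  finally have "eigenvalue S (Re a)" using eigenvalue_root_char_poly[OF S] by simp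
  then obtain u where "eigenvector S u (Re a)" unfolding eigenvalue_def by blast
  thus ?thesis unfolding eigenvector_def using S by auto
qed

lemma self_sprod_zero:
  fixes v :: "real vec"
  assumes v: "v \<in> carrier_vec n" and z: "v \<bullet> v = 0"
  shows "v = 0\<^sub>v n"
proof -
  have "(\<Sum>i\<in>{0..<n}. v$i * v$i) = 0" using z v unfolding scalar_prod_def by auto
  hence "\<forall>i\<in>{0..<n}. v$i * v$i = 0" by (subst sum_nonneg_eq_0_iff[symmetric]) auto
  thus ?thesis using v by (intro eq_vecI) auto
qed

lemma self_sprod_pos:
  fixes v :: "real vec"
  assumes v: "v \<in> carrier_vec n" and nz: "v \<noteq> 0\<^sub>v n"
  shows "v \<bullet> v > 0"
proof -
  have "v \<bullet> v \<ge> 0" unfolding scalar_prod_def by (auto intro!: sum_nonneg)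
  thus ?thesis using self_sprod_zero[OF v] nz by fastforce
qed

lemma delta_sum1: "i < (n::nat) \<Longrightarrow> (\<Sum>k = 0..<n. (if i = k then 1 else 0) * f k) = (f i :: real)"
proof -
  assume i: "i < n"
  have "(\<Sum>k = 0..<n. (if i = k then 1 else 0) * f k) = (\<Sum>k = 0..<n. if i = k then f k else 0)"
    by (rule sum.cong) auto
  also have "\<dots> = f i" using i by (subst sum.delta') auto
  finally show ?thesis .
qed

lemma delta_sum2: "i < (n::nat) \<Longrightarrow> (\<Sum>k = 0..<n. (if k = i then 1 else 0) * f k) = (f i :: real)"
proof -
  assume i: "i < n"
  have "(\<Sum>k = 0..<n. (if k = i then 1 else 0) * f k) = (\<Sum>k = 0..<n. if k = i then f k else 0)"
    by (rule sum.cong) auto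
  also have "\<dots> = f i" using i by (subst sum.delta) auto
  finally show ?thesis .
qed

lemma householder:
  fixes u :: "real vec"
  assumes u: "u \<in> carrier_vec n" and n: "n > 0" and unit: "u \<bullet> u = 1"
  shows "\<exists>T. T \<in> carrier_mat n n \<and> transpose_mat T * T = 1\<^sub>m n \<and> (\<forall>i<n. T $$ (i,0) = u $ i)"
proof -
  define w where "w = u - unit_vec n 0"
  define c where "c = w \<bullet> w"
  have w: "w \<in> carrier_vec n" unfolding w_def using u by simp
  have wi: "\<And>i. i < n \<Longrightarrow> w $ i = u $ i - (if i = 0 then 1 else 0)"
    unfolding w_def using u by auto
  have uu: "(\<Sum>k = 0..<n. u$k * u$k) = 1" using unit u unfolding scalar_prod_def by auto
  have c_sum: "c = (\<Sum>k = 0..<n. w$k * w$k)" unfolding c_def scalar_prod_def using w by auto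
  also have "\<dots> = (\<Sum>k = 0..<n. u$k * u$k) - 2 * u$0 + 1"
  proof -
    have "(\<Sum>k = 0..<n. w$k * w$k) = (\<Sum>k = 0..<n. u$k * u$k - 2 * (if k = 0 then u$k else 0)
       + (if k = 0 then 1 else 0))"
      by (rule sum.cong, auto simp: wi algebra_simps power2_eq_square)
    also have "\<dots> = (\<Sum>k = 0..<n. u$k * u$k) - 2 * u$0 + 1"
      using n by (simp add: sum.distrib sum_subtractf sum_distrib_left[symmetric])
    finally show ?thesis .
  qed
  finally have c2: "c = 2 - 2 * u$0" using uu by simp
  show ?thesis
  proof (cases "c = 0")
    case True
    hence "w = 0\<^sub>v n" using w unfolding c_def by (metis self_sprod_zero)  
    have "\<And>i. i < n \<Longrightarrow> u $ i = unit_vec n 0 $ i"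
    proof -
      fix i assume i: "i < n"
      have "w $ i = 0" using \<open>w = 0\<^sub>v n\<close> i by simp
      thus "u $ i = unit_vec n 0 $ i" using wi[OF i] i by auto
    qed
    hence "u = unit_vec n 0" using u by (intro eq_vecI) auto
    thus ?thesis using n by (intro exI[of _ "1\<^sub>m n"]) auto
  next
    case False
    define T where "T = mat n n (\<lambda>(i,j). (if i = j then 1 else 0) - 2 / c * w$i * w$j)"
    have T: "T \<in> carrier_mat n n" unfolding T_def by simp
    have Tt: "transpose_mat T = T" unfolding T_def by (rule eq_matI) auto
    have "T * T = 1\<^sub>m n"
    proof (rule eq_matI)
      fix i j assume ij: "i < dim_row (1\<^sub>m n)" "j < dim_col (1\<^sub>m n)"
      hence ij: "i < n" "j < n" by auto
      have "(T * T) $$ (i,j) = (\<Sum>k = 0..<n. ((if i = k then 1 else 0) - 2 / c * w$i * w$k) *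
         ((if k = j then 1 else 0) - 2 / c * w$k * w$j))"
        using ij unfolding T_def by (auto simp: scalar_prod_def intro!: sum.cong)
      also have "\<dots> = (\<Sum>k = 0..<n. (if i = k then 1 else 0) * (if k = j then 1 else 0)
         - (if i = k then 1 else 0) * (2 / c * w$k * w$j) - (if k = j then 1 else 0) * (2 / c * w$i * w$k)
         + 4 / c^2 * w$i * w$j * (w$k * w$k))"
        by (rule sum.cong, auto simp: algebra_simps power2_eq_square)
      also have "\<dots> = (if i = j then 1 else 0) - 2 / c * w$i * w$j - 2 / c * w$i * w$j
          + 4 / c^2 * w$i * w$j * c"
      proof -
        have s1: "(\<Sum>k = 0..<n. (if i = k then 1 else 0) * (if k = j then 1 else (0::real))) = (if i = j then 1 else 0)"
          using delta_sum1[of i n "\<lambda>k. if k = j then 1 else 0"] ij by simp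
        have s2: "(\<Sum>k = 0..<n. (if i = k then 1 else 0) * (2 / c * w$k * w$j)) = 2 / c * w$i * w$j"
          using delta_sum1[of i n "\<lambda>k. 2 / c * w$k * w$j"] ij by simp
        have s3: "(\<Sum>k = 0..<n. (if k = j then 1 else 0) * (2 / c * w$i * w$k)) = 2 / c * w$i * w$j"
          using delta_sum2[of j n "\<lambda>k. 2 / c * w$i * w$k"] ij by simp
        have s4: "(\<Sum>k = 0..<n. 4 / c^2 * w$i * w$j * (w$k * w$k)) = 4 / c^2 * w$i * w$j * c"
          unfolding c_sum by (simp add: sum_distrib_left)
        show ?thesis unfolding sum.distrib sum_subtractf s1 s2 s3 s4 ..
      qed
      also have "\<dots> = (if i = j then 1 else 0)"
      proof -
        have "4 / c^2 * w$i * w$j * c = 2 / c * w$i * w$j + 2 / c * w$i * w$j"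
          using False by (simp add: power2_eq_square divide_simps)
        thus ?thesis by simp
      qed
      finally show "(T * T) $$ (i, j) = 1\<^sub>m n $$ (i, j)" using ij by simp
    qed (auto simp: T_def)
    moreover have "\<forall>i<n. T $$ (i,0) = u $ i"
    proof (intro allI impI)
      fix i assume i: "i < n"
      have "w$0 = - c / 2" using c2 wi[of 0] n by simp
      hence "w$0 * 2 = - c" by simp
      have "2 / c * w$i * w$0 = w$i * (w$0 * 2) / c" by simp
      also have "\<dots> = - w$i" using False \<open>w$0 * 2 = - c\<close> by simp
      finally have "2 / c * w$i * w$0 = - w$i" .
      hence "T $$ (i,0) = (if i = 0 then 1 else 0) + w$i" unfolding T_def using i n by simp
      thus "T $$ (i,0) = u $ i" using wi[OF i] by simp
    qed
    ultimately show ?thesis using T Tt by auto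
  qed
qed


definition diagm :: "nat \<Rightarrow> (nat \<Rightarrow> real) \<Rightarrow> real mat" where
  "diagm n d = mat n n (\<lambda>(i,j). if i = j then d i else 0)"

lemma diagm_carrier[simp]: "diagm n d \<in> carrier_mat n n" unfolding diagm_def by simp

lemma transpose_sandwich:
  fixes P S :: "'a :: comm_semiring_0 mat"
  assumes P: "P \<in> carrier_mat n k" and S: "S \<in> carrier_mat n n"
  shows "transpose_mat (transpose_mat P * S * P) = transpose_mat P * transpose_mat S * P"
proof -
  have "transpose_mat ((transpose_mat P * S) * P) = transpose_mat P * transpose_mat (transpose_mat P * S)"
    using P S by (intro transpose_mult[of _ k n]) auto
  also have "transpose_mat (transpose_mat P * S) = transpose_mat S * P"
    using P S by (subst transpose_mult[of _ k n]) auto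
  finally show ?thesis using P S by simp
qed

lemma sandwich_mult:
  fixes T F S :: "'a :: comm_semiring_1 mat"
  assumes T: "T \<in> carrier_mat n n" and F: "F \<in> carrier_mat n n" and S: "S \<in> carrier_mat n n"
  shows "transpose_mat (T * F) * S * (T * F) = transpose_mat F * (transpose_mat T * S * T) * F"
proof -
  have Tt: "transpose_mat T \<in> carrier_mat n n" and Ft: "transpose_mat F \<in> carrier_mat n n"
    using T F by auto
  have "transpose_mat (T * F) = transpose_mat F * transpose_mat T" using T F by (rule transpose_mult)
  hence "transpose_mat (T * F) * S * (T * F) = transpose_mat F * transpose_mat T * S * (T * F)" by simp
  also have "\<dots> = transpose_mat F * (transpose_mat T * S * T) * F"
    using Tt Ft T F S by (simp add: assoc_mult_mat[of _ n n _ n _ n])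
  finally show ?thesis .
qed

lemma spectral:
  fixes S :: "real mat"
  assumes "S \<in> carrier_mat n n" and "sym_mat S"
  shows "\<exists>Q d. Q \<in> carrier_mat n n \<and> transpose_mat Q * Q = 1\<^sub>m n \<and> transpose_mat Q * S * Q = diagm n d"
  using assms
proof (induction n arbitrary: S)
  case 0
  thus ?case by (intro exI[of _ "1\<^sub>m 0"] exI[of _ "\<lambda>_. 0"]) (auto intro!: eq_matI simp: diagm_def)
next
  case (Suc n)
  note S = Suc.prems(1) and sym = Suc.prems(2)
  obtain l v where v: "v \<in> carrier_vec (Suc n)" "v \<noteq> 0\<^sub>v (Suc n)" and Sv: "S *\<^sub>v v = l \<cdot>\<^sub>v v"
    using real_eigen_exists[OF S sym] by auto
  define u where "u = (1 / sqrt (v \<bullet> v)) \<cdot>\<^sub>v v"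
  have vv: "v \<bullet> v > 0" using self_sprod_pos[OF v] .
  have u: "u \<in> carrier_vec (Suc n)" unfolding u_def using v by simp
  have uu: "u \<bullet> u = 1" unfolding u_def using v vv
    by (simp add: smult_scalar_prod_distrib scalar_prod_smult_distrib[OF v(1)])
  have Su: "S *\<^sub>v u = l \<cdot>\<^sub>v u" unfolding u_def using S v Sv
    by (simp add: mult_mat_vec smult_smult_assoc mult.commute)
  obtain T where T: "T \<in> carrier_mat (Suc n) (Suc n)" and TT: "transpose_mat T * T = 1\<^sub>m (Suc n)"
    and T0: "\<forall>i<Suc n. T $$ (i,0) = u $ i"
    using householder[OF u _ uu] by auto
  have colT: "col T 0 = u" using T T0 u by (intro eq_vecI) auto
  define B where "B = transpose_mat T * S * T"
  have B: "B \<in> carrier_mat (Suc n) (Suc n)" unfolding B_def using T S by auto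
  have symB: "transpose_mat B = B" unfolding B_def transpose_sandwich[OF T S]
    using sym unfolding sym_mat_def by simp
  have "col B 0 = (transpose_mat T * S) *\<^sub>v col T 0" unfolding B_def using T S
    by (intro col_mult2[of _ "Suc n" "Suc n"]) auto
  also have "\<dots> = (transpose_mat T * S) *\<^sub>v u" using colT by simp
  also have "\<dots> = transpose_mat T *\<^sub>v (S *\<^sub>v u)" using T S u by simp
  also have "\<dots> = l \<cdot>\<^sub>v (transpose_mat T *\<^sub>v u)" using T u unfolding Su by (simp add: mult_mat_vec)
  also have "transpose_mat T *\<^sub>v u = col (transpose_mat T * T) 0"
  proof -
    have "col (transpose_mat T * T) 0 = transpose_mat T *\<^sub>v col T 0"
      by (rule col_mult2[of _ "Suc n" "Suc n" _ "Suc n"]) (use T in auto)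
    thus ?thesis using colT by simp
  qed
  also have "\<dots> = unit_vec (Suc n) 0" unfolding TT by simp
  finally have colB: "col B 0 = l \<cdot>\<^sub>v unit_vec (Suc n) 0" .
  have Bi0: "\<And>i. i < Suc n \<Longrightarrow> B $$ (i,0) = (if i = 0 then l else 0)"
  proof -
    fix i assume i: "i < Suc n"
    have "B $$ (i,0) = col B 0 $ i" using B i by simp
    thus "B $$ (i,0) = (if i = 0 then l else 0)" unfolding colB using i by simp
  qed
  have B0j: "\<And>j. j < Suc n \<Longrightarrow> B $$ (0,j) = (if j = 0 then l else 0)"
  proof -
    fix j assume j: "j < Suc n"
    have "B $$ (0,j) = transpose_mat B $$ (j,0)" using B j by simp
    thus "B $$ (0,j) = (if j = 0 then l else 0)" using symB Bi0[OF j] by simp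
  qed
  define S' where "S' = mat n n (\<lambda>(i,j). B $$ (Suc i, Suc j))"
  have S': "S' \<in> carrier_mat n n" unfolding S'_def by simp
  have symS': "sym_mat S'" unfolding sym_mat_def S'_def
  proof (rule eq_matI)
    fix i j assume "i < dim_row (mat n n (\<lambda>(i,j). B $$ (Suc i, Suc j)))"
      "j < dim_col (mat n n (\<lambda>(i,j). B $$ (Suc i, Suc j)))"
    hence ij: "i < n" "j < n" by auto
    have "B $$ (Suc j, Suc i) = transpose_mat B $$ (Suc i, Suc j)" using B ij by simp
    thus "transpose_mat (mat n n (\<lambda>(i,j). B $$ (Suc i, Suc j))) $$ (i, j) =
      mat n n (\<lambda>(i,j). B $$ (Suc i, Suc j)) $$ (i, j)" using ij symB by simp
  qed auto
  define L where "L = mat 1 1 (\<lambda>_. l)"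
  have L: "L \<in> carrier_mat 1 1" unfolding L_def by simp
  have Bblock: "B = four_block_mat L (0\<^sub>m 1 n) (0\<^sub>m n 1) S'"
  proof (rule eq_matI)
    fix i j assume "i < dim_row (four_block_mat L (0\<^sub>m 1 n) (0\<^sub>m n 1) S')"
      "j < dim_col (four_block_mat L (0\<^sub>m 1 n) (0\<^sub>m n 1) S')"
    hence ij: "i < Suc n" "j < Suc n" using L S' by auto
    show "B $$ (i, j) = four_block_mat L (0\<^sub>m 1 n) (0\<^sub>m n 1) S' $$ (i, j)"
    proof (cases "i = 0 \<or> j = 0")
      case True
      thus ?thesis using ij L S' Bi0 B0j by (auto simp: L_def)
    next
      case False
      then obtain i' j' where "i = Suc i'" "j = Suc j'" by (metis not0_implies_Suc)
      thus ?thesis using ij L S' by (auto simp: S'_def)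
    qed
  qed (use B L S' in auto)
  from Suc.IH[OF S' symS'] obtain Q' d' where Q': "Q' \<in> carrier_mat n n"
    and QQ': "transpose_mat Q' * Q' = 1\<^sub>m n" and QSQ': "transpose_mat Q' * S' * Q' = diagm n d'" by auto
  define F where "F = four_block_mat (1\<^sub>m 1) (0\<^sub>m 1 n) (0\<^sub>m n 1) Q'"
  have F: "F \<in> carrier_mat (Suc n) (Suc n)" unfolding F_def using Q'
    using four_block_carrier_mat[of "1\<^sub>m 1" 1 1 Q' n n] by simp
  have Ft: "transpose_mat F = four_block_mat (1\<^sub>m 1) (0\<^sub>m 1 n) (0\<^sub>m n 1) (transpose_mat Q')"
    unfolding F_def using Q' by (subst transpose_four_block_mat) auto
  define Q where "Q = T * F"
  have Q: "Q \<in> carrier_mat (Suc n) (Suc n)" unfolding Q_def using T F by simp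
  have TtC: "transpose_mat T \<in> carrier_mat (Suc n) (Suc n)" and FtC: "transpose_mat F \<in> carrier_mat (Suc n) (Suc n)"
    using T F by auto
  have Qt: "transpose_mat Q = transpose_mat F * transpose_mat T" unfolding Q_def
    using T F by (simp add: transpose_mult)
  have "transpose_mat Q * Q = transpose_mat Q * 1\<^sub>m (Suc n) * Q" using Q by simp
  also have "\<dots> = transpose_mat F * (transpose_mat T * 1\<^sub>m (Suc n) * T) * F"
    unfolding Q_def by (rule sandwich_mult[OF T F]) simp
  also have "\<dots> = transpose_mat F * F"
  proof -
    have "transpose_mat T * 1\<^sub>m (Suc n) * T = 1\<^sub>m (Suc n)" using T TT by simp
    thus ?thesis using F by simp
  qed
  also have "\<dots> = four_block_mat (1\<^sub>m 1) (0\<^sub>m 1 n) (0\<^sub>m n 1) (1\<^sub>m n)"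
    unfolding Ft unfolding F_def using Q' QQ'
    by (subst mult_four_block_mat[of _ 1 1 _ n _ n _ _ 1 _ n], auto)
  also have "\<dots> = 1\<^sub>m (Suc n)" using four_block_one_mat[of 1 n] by simp
  finally have QQ: "transpose_mat Q * Q = 1\<^sub>m (Suc n)" .
  have "transpose_mat Q * S * Q = transpose_mat F * B * F"
    unfolding Q_def B_def by (rule sandwich_mult[OF T F S])
  also have "\<dots> = four_block_mat L (0\<^sub>m 1 n) (0\<^sub>m n 1) (transpose_mat Q' * S' * Q')"
    unfolding Ft unfolding F_def Bblock using Q' L S'
    by (subst mult_four_block_mat[of _ 1 1 _ n _ n _ _ 1 _ n], auto,
        subst mult_four_block_mat[of _ 1 1 _ n _ n _ _ 1 _ n], auto)
  also have "\<dots> = diagm (Suc n) (\<lambda>i. if i = 0 then l else d' (i - 1))"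
    unfolding QSQ' by (rule eq_matI) (auto simp: L_def diagm_def)
  finally show ?case using Q QQ by blast
qed


lemma sandwich_entry:
  fixes P A :: "real mat"
  assumes P: "P \<in> carrier_mat n k" and A: "A \<in> carrier_mat n n" and i: "i < k" and j: "j < k"
  shows "(transpose_mat P * A * P) $$ (i,j) = col P i \<bullet> (A *\<^sub>v col P j)"
proof -
  have "transpose_mat P * A * P = transpose_mat P * (A * P)" using P A by simp
  hence "(transpose_mat P * A * P) $$ (i,j) = row (transpose_mat P) i \<bullet> col (A * P) j"
    using P A i j by simp
  also have "\<dots> = col P i \<bullet> (A *\<^sub>v col P j)" using P A i j col_mult2[OF A P j] by simp
  finally show ?thesis .
qed

lemma diagm_mult: "diagm n a * diagm n b = diagm n (\<lambda>i. a i * b i)"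
proof (rule eq_matI)
  fix i j assume "i < dim_row (diagm n (\<lambda>i. a i * b i))" "j < dim_col (diagm n (\<lambda>i. a i * b i))"
  hence ij: "i < n" "j < n" by (auto simp: diagm_def)
  have "(diagm n a * diagm n b) $$ (i,j) = (\<Sum>k = 0..<n. (if i = k then a i else 0) * (if k = j then b k else 0))"
    using ij by (auto simp: diagm_def scalar_prod_def intro!: sum.cong)
  also have "\<dots> = (\<Sum>k = 0..<n. (if i = k then 1 else 0) * ((if k = j then b k else 0) * a i))"
    by (rule sum.cong) auto
  also have "\<dots> = (if i = j then b i else 0) * a i"
    using delta_sum1[of i n "\<lambda>k. (if k = j then b k else 0) * a i"] ij by simp
  finally show "(diagm n a * diagm n b) $$ (i,j) = diagm n (\<lambda>i. a i * b i) $$ (i,j)"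
    using ij by (simp add: diagm_def)
qed (auto simp: diagm_def)

lemma diagm_transpose[simp]: "transpose_mat (diagm n a) = diagm n a"
  by (rule eq_matI) (auto simp: diagm_def)

lemma diagm_one: "diagm n (\<lambda>_. 1) = 1\<^sub>m n"
  by (rule eq_matI) (auto simp: diagm_def)

lemma det_diagm: "det (diagm n a) = (\<Prod>i\<leftarrow>[0..<n]. a i)"
proof -
  have "upper_triangular (diagm n a)" unfolding upper_triangular_def diagm_def by auto
  hence "det (diagm n a) = prod_list (diag_mat (diagm n a))" by (rule det_upper_triangular[OF _ diagm_carrier])
  also have "diag_mat (diagm n a) = map a [0..<n]" unfolding diag_mat_def diagm_def
    by (rule map_cong) auto
  finally show ?thesis by simp
qed

lemma simdiag:
  fixes K M :: "real mat"
  assumes K: "K \<in> carrier_mat n n" and symK: "sym_mat K" and M: "pd_mat n M"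
  shows "\<exists>P \<mu>. P \<in> carrier_mat n n \<and> transpose_mat P * M * P = 1\<^sub>m n \<and> transpose_mat P * K * P = diagm n \<mu>"
proof -
  have Mc: "M \<in> carrier_mat n n" and symM: "sym_mat M"
    and Mpos: "\<And>x. x \<in> carrier_vec n \<Longrightarrow> x \<noteq> 0\<^sub>v n \<Longrightarrow> x \<bullet> (M *\<^sub>v x) > 0"
    using M unfolding pd_mat_def by auto
  obtain Q d where Q: "Q \<in> carrier_mat n n" and QQ: "transpose_mat Q * Q = 1\<^sub>m n"
    and QMQ: "transpose_mat Q * M * Q = diagm n d" using spectral[OF Mc symM] by auto
  have dpos: "\<And>j. j < n \<Longrightarrow> d j > 0"
  proof -
    fix j assume j: "j < n"
    have "col Q j \<bullet> col Q j = 1"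
      using sandwich_entry[OF Q _ j j, of "1\<^sub>m n"] QQ Q j by simp
    have nz: "col Q j \<noteq> 0\<^sub>v n"
    proof
      assume "col Q j = 0\<^sub>v n"
      hence "col Q j \<bullet> col Q j = 0" by simp
      with \<open>col Q j \<bullet> col Q j = 1\<close> show False by simp
    qed
    have deq: "d j = (transpose_mat Q * M * Q) $$ (j,j)" unfolding QMQ using j by (simp add: diagm_def)
    have cQ: "col Q j \<in> carrier_vec n" unfolding carrier_vec_def using Q by simp
    have "col Q j \<bullet> (M *\<^sub>v col Q j) > 0" by (rule Mpos[OF cQ nz])
    thus "d j > 0" unfolding deq sandwich_entry[OF Q Mc j j] .
  qed
  define D where "D = diagm n (\<lambda>j. 1 / sqrt (d j))"
  have D: "D \<in> carrier_mat n n" unfolding D_def by simp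
  define P0 where "P0 = Q * D"
  have P0: "P0 \<in> carrier_mat n n" unfolding P0_def using Q D by simp
  have "transpose_mat P0 * M * P0 = transpose_mat D * (transpose_mat Q * M * Q) * D"
    unfolding P0_def by (rule sandwich_mult[OF Q D Mc])
  also have "\<dots> = diagm n (\<lambda>j. 1 / sqrt (d j) * d j * (1 / sqrt (d j)))"
    unfolding QMQ D_def diagm_transpose diagm_mult ..
  also have "\<dots> = diagm n (\<lambda>_. 1)"
  proof -
    have one: "\<And>i. i < n \<Longrightarrow> 1 / sqrt (d i) * d i * (1 / sqrt (d i)) = 1"
    proof -
      fix i assume i: "i < n"
      have "sqrt (d i) * sqrt (d i) = d i" using dpos[OF i] by simp
      moreover have "sqrt (d i) > 0" using dpos[OF i] by simp
      ultimately show "1 / sqrt (d i) * d i * (1 / sqrt (d i)) = 1" by (simp add: divide_simps)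
    qed
    show ?thesis by (rule eq_matI) (use dpos in \<open>auto simp: diagm_def one abs_of_pos\<close>, use dpos in fastforce)
  qed
  finally have P0M: "transpose_mat P0 * M * P0 = 1\<^sub>m n" unfolding diagm_one .
  define S where "S = transpose_mat P0 * K * P0"
  have S: "S \<in> carrier_mat n n" unfolding S_def using P0 K by simp
  have symS: "sym_mat S" unfolding sym_mat_def S_def transpose_sandwich[OF P0 K]
    using symK unfolding sym_mat_def by simp
  obtain Q2 \<mu> where Q2: "Q2 \<in> carrier_mat n n" and QQ2: "transpose_mat Q2 * Q2 = 1\<^sub>m n"
    and QSQ2: "transpose_mat Q2 * S * Q2 = diagm n \<mu>" using spectral[OF S symS] by auto
  define P where "P = P0 * Q2"
  have P: "P \<in> carrier_mat n n" unfolding P_def using P0 Q2 by simp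
  have "transpose_mat P * M * P = transpose_mat Q2 * (transpose_mat P0 * M * P0) * Q2"
    unfolding P_def by (rule sandwich_mult[OF P0 Q2 Mc])
  also have "\<dots> = 1\<^sub>m n" unfolding P0M using Q2 QQ2 by simp
  finally have PM: "transpose_mat P * M * P = 1\<^sub>m n" .
  have "transpose_mat P * K * P = transpose_mat Q2 * S * Q2"
    unfolding P_def S_def by (rule sandwich_mult[OF P0 Q2 K])
  with PM P QSQ2 show ?thesis by auto
qed

lemma det_sandwich:
  fixes P A :: "'a :: comm_ring_1 mat"
  assumes P: "P \<in> carrier_mat n n" and A: "A \<in> carrier_mat n n"
  shows "det (transpose_mat P * A * P) = det P * det P * det A"
proof -
  have "det (transpose_mat P * A * P) = det (transpose_mat P * A) * det P"
    by (rule det_mult[of _ n]) (use P A in auto)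
  also have "det (transpose_mat P * A) = det (transpose_mat P) * det A"
    by (rule det_mult[of _ n]) (use P A in auto)
  finally show ?thesis using det_transpose[OF P] by (simp add: mult_ac)
qed

lemma gcp_eval:
  assumes K: "K \<in> carrier_mat n n" and M: "M \<in> carrier_mat n n"
  shows "poly (gen_char_poly K M) x = det (K - x \<cdot>\<^sub>m M)"
  unfolding gen_char_poly_def
  by (rule poly_det_cong[of _ n]) (use K M in auto)

lemma gcp_roots:
  fixes K M P :: "real mat"
  assumes K: "K \<in> carrier_mat n n" and M: "M \<in> carrier_mat n n" and P: "P \<in> carrier_mat n n"
    and PM: "transpose_mat P * M * P = 1\<^sub>m n" and PK: "transpose_mat P * K * P = diagm n \<mu>"
  shows "proots (gen_char_poly K M) = mset (map \<mu> [0..<n])"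
proof -
  have "det (transpose_mat P * M * P) = 1" unfolding PM by simp
  hence "det P * det P * det M = 1" using det_sandwich[OF P M] by simp
  hence dP: "det P \<noteq> 0" by auto
  define q where "q = (\<Prod>i\<leftarrow>[0..<n]. [:\<mu> i, -1:])"
  have "poly ([:det P * det P:] * gen_char_poly K M) = poly q"
  proof
    fix x
    have "transpose_mat P * (K - x \<cdot>\<^sub>m M) * P = transpose_mat P * K * P - x \<cdot>\<^sub>m (transpose_mat P * M * P)"
    proof -
      have Pt: "transpose_mat P \<in> carrier_mat n n" using P by simp
      have xM: "x \<cdot>\<^sub>m M \<in> carrier_mat n n" using M by simp
      have "transpose_mat P * (K - x \<cdot>\<^sub>m M) = transpose_mat P * K - transpose_mat P * (x \<cdot>\<^sub>m M)"
        by (rule mult_minus_distrib_mat[OF Pt K xM])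
      also have "transpose_mat P * (x \<cdot>\<^sub>m M) = x \<cdot>\<^sub>m (transpose_mat P * M)"
        by (rule mult_smult_distrib[OF Pt M])
      finally have "transpose_mat P * (K - x \<cdot>\<^sub>m M) * P = (transpose_mat P * K - x \<cdot>\<^sub>m (transpose_mat P * M)) * P"
        by simp
      also have "\<dots> = transpose_mat P * K * P - (x \<cdot>\<^sub>m (transpose_mat P * M)) * P"
        by (rule minus_mult_distrib_mat[of _ n n]) (use Pt K M P in auto)
      also have "(x \<cdot>\<^sub>m (transpose_mat P * M)) * P = x \<cdot>\<^sub>m (transpose_mat P * M * P)"
        by (rule mult_smult_assoc_mat[of _ n n]) (use Pt M P in auto)
      finally show ?thesis .
    qed
    also have "\<dots> = diagm n (\<lambda>i. \<mu> i - x)" unfolding PK PM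
      by (rule eq_matI) (auto simp: diagm_def)
    finally have eq: "transpose_mat P * (K - x \<cdot>\<^sub>m M) * P = diagm n (\<lambda>i. \<mu> i - x)" .
    have "det P * det P * det (K - x \<cdot>\<^sub>m M) = det (transpose_mat P * (K - x \<cdot>\<^sub>m M) * P)"
      by (rule det_sandwich[OF P, symmetric]) (use K M in auto)
    also have "\<dots> = (\<Prod>i\<leftarrow>[0..<n]. \<mu> i - x)" unfolding eq det_diagm ..
    also have "\<dots> = poly q x" unfolding q_def by (induct n) (auto simp: algebra_simps)
    finally show "poly ([:det P * det P:] * gen_char_poly K M) x = poly q x"
      using gcp_eval[OF K M] by simp
  qed
  hence eq: "[:det P * det P:] * gen_char_poly K M = q" by (rule poly_eq_poly_eq_iff[THEN iffD1])
  have q0: "q \<noteq> 0" unfolding q_def by (auto simp: prod_list_zero_iff)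
  have "proots q = proots (gen_char_poly K M)" unfolding eq[symmetric] using dP q0 eq
    by (subst proots_mult) auto
  moreover have "proots q = mset (map \<mu> [0..<n])" unfolding q_def
  proof (induct n)
    case (Suc n)
    have l: "[:\<mu> n, -1:] = smult (-1) [:- \<mu> n, 1:]" by simp
    have nz: "(\<Prod>i\<leftarrow>[0..<n]. [:\<mu> i, -1:]) \<noteq> 0" by (auto simp: prod_list_zero_iff)
    have pf: "proots [:\<mu> n, -1:] = {#\<mu> n#}"
      by (subst l, subst proots_smult) auto
    have "proots (\<Prod>i\<leftarrow>[0..<Suc n]. [:\<mu> i, -1:]) = proots ((\<Prod>i\<leftarrow>[0..<n]. [:\<mu> i, -1:]) * [:\<mu> n, -1:])"
      by simp
    also have "\<dots> = proots (\<Prod>i\<leftarrow>[0..<n]. [:\<mu> i, -1:]) + proots [:\<mu> n, -1:]"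
      by (rule proots_mult) (use nz in auto)
    finally show ?case using Suc pf by simp
  qed simp
  ultimately show ?thesis by simp
qed



lemma kernel_exists:
  fixes A :: "real mat"
  assumes A: "A \<in> carrier_mat r c" and rc: "r < c"
  shows "\<exists>z. z \<in> carrier_vec c \<and> z \<noteq> 0\<^sub>v c \<and> A *\<^sub>v z = 0\<^sub>v r"
proof -
  define C where "C = mat c c (\<lambda>(i,j). if i < r then A $$ (i,j) else 0)"
  have C: "C \<in> carrier_mat c c" unfolding C_def by simp
  have "det C = 0" unfolding det_def'[OF C]
  proof (rule sum.neutral, intro ballI)
    fix p assume "p \<in> {p. p permutes {0..<c}}"
    hence perm: "p permutes {0..<c}" by simp
    have "(\<Prod>i = 0..<c. C $$ (i, p i)) = 0"
    proof (rule prod_zero)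
      have "c - 1 \<in> {0..<c}" using rc by simp
      hence "p (c - 1) \<in> {0..<c}" using permutes_in_image[OF perm, of "c - 1"] by blast
      hence "p (c - 1) < c" by simp
      thus "\<exists>i\<in>{0..<c}. C $$ (i, p i) = 0" using rc
        by (intro bexI[of _ "c - 1"]) (auto simp: C_def)
    qed simp
    thus "signof p * (\<Prod>i = 0..<c. C $$ (i, p i)) = 0" by simp
  qed
  then obtain z where z: "z \<in> carrier_vec c" "z \<noteq> 0\<^sub>v c" and Cz: "C *\<^sub>v z = 0\<^sub>v c"
    using det_0_iff_vec_prod_zero_field[OF C] by auto
  have "A *\<^sub>v z = 0\<^sub>v r"
  proof (rule eq_vecI)
    fix i assume "i < dim_vec (0\<^sub>v r)"
    hence i: "i < r" by simp
    have "(C *\<^sub>v z) $ i = 0" using Cz i rc by simp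
    moreover have "(C *\<^sub>v z) $ i = (A *\<^sub>v z) $ i" using i rc A z C
      by (auto simp: C_def mult_mat_vec_def scalar_prod_def row_def intro!: sum.cong)
    ultimately show "(A *\<^sub>v z) $ i = 0\<^sub>v r $ i" using i by simp
  qed (use A in simp)
  thus ?thesis using z by blast
qed

lemma qf_sandwich:
  fixes P A :: "real mat"
  assumes P: "P \<in> carrier_mat n n" and A: "A \<in> carrier_mat n n" and a: "a \<in> carrier_vec n"
  shows "(P *\<^sub>v a) \<bullet> (A *\<^sub>v (P *\<^sub>v a)) = a \<bullet> ((transpose_mat P * A * P) *\<^sub>v a)"
proof -
  have "(transpose_mat P * A * P) *\<^sub>v a = (transpose_mat P * A) *\<^sub>v (P *\<^sub>v a)"
    by (rule assoc_mult_mat_vec[of _ n n]) (use P A a in auto)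
  also have "\<dots> = transpose_mat P *\<^sub>v (A *\<^sub>v (P *\<^sub>v a))"
    by (rule assoc_mult_mat_vec[of _ n n]) (use P A a in auto)
  finally have "(transpose_mat P * A * P) *\<^sub>v a = transpose_mat P *\<^sub>v (A *\<^sub>v (P *\<^sub>v a))" .
  hence "a \<bullet> ((transpose_mat P * A * P) *\<^sub>v a) = (transpose_mat P *\<^sub>v (A *\<^sub>v (P *\<^sub>v a))) \<bullet> a"
    using P A a by (simp add: comm_scalar_prod[of _ n])
  also have "\<dots> = (A *\<^sub>v (P *\<^sub>v a)) \<bullet> (P *\<^sub>v a)"
    by (rule transpose_vec_mult_scalar[OF P a]) (use P A a in simp)
  also have "\<dots> = (P *\<^sub>v a) \<bullet> (A *\<^sub>v (P *\<^sub>v a))" using P A a by (simp add: comm_scalar_prod[of _ n])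
  finally show ?thesis by simp
qed

lemma qf_diagm:
  assumes a: "a \<in> carrier_vec n"
  shows "a \<bullet> (diagm n \<mu> *\<^sub>v a) = (\<Sum>j = 0..<n. \<mu> j * (a$j)^2)"
proof -
  have "\<And>i. i < n \<Longrightarrow> (diagm n \<mu> *\<^sub>v a) $ i = \<mu> i * a $ i"
  proof -
    fix i assume i: "i < n"
    have "(diagm n \<mu> *\<^sub>v a) $ i = (\<Sum>k = 0..<n. (if i = k then 1 else 0) * (\<mu> i * a $ k))"
      using i a by (auto simp: diagm_def mult_mat_vec_def scalar_prod_def row_def intro!: sum.cong)
    also have "\<dots> = \<mu> i * a $ i" using delta_sum1[of i n "\<lambda>k. \<mu> i * a $ k"] i by simp
    finally show "(diagm n \<mu> *\<^sub>v a) $ i = \<mu> i * a $ i" .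
  qed
  hence "diagm n \<mu> *\<^sub>v a = vec n (\<lambda>i. \<mu> i * a $ i)"
    by (intro eq_vecI) (auto simp: diagm_def)
  thus ?thesis using a unfolding scalar_prod_def
    by (auto simp: power2_eq_square intro!: sum.cong)
qed

lemma card_filter_upt: "length (filter p [0..<n]) = card {j. j < n \<and> p j}"
proof -
  have "{i. i < n \<and> p ([0..<n] ! i)} = {j. j < n \<and> p j}" by auto
  thus ?thesis using length_filter_conv_card[of p "[0..<n]"] by simp
qed

lemma two_span:
  fixes P Q :: "real mat"
  assumes P: "P \<in> carrier_mat n n" and Q: "Q \<in> carrier_mat n n"
    and card: "card {j. j < n \<and> pa j} + card {j. j < n \<and> pb j} > n"
  shows "\<exists>a b. a \<in> carrier_vec n \<and> b \<in> carrier_vec n \<and> (\<forall>j<n. \<not> pa j \<longrightarrow> a$j = 0)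
    \<and> (\<forall>j<n. \<not> pb j \<longrightarrow> b$j = 0) \<and> P *\<^sub>v a = Q *\<^sub>v b \<and> (a \<noteq> 0\<^sub>v n \<or> b \<noteq> 0\<^sub>v n)"
proof -
  define cA where "cA = filter (\<lambda>j. \<not> pa j) [0..<n]"
  define cB where "cB = filter (\<lambda>j. \<not> pb j) [0..<n]"
  define lA where "lA = length cA"
  define lB where "lB = length cB"
  have lA: "lA + card {j. j < n \<and> pa j} = n"
    using sum_length_filter_compl[of pa "[0..<n]"] card_filter_upt[of pa n]
    unfolding lA_def cA_def by simp
  have lB: "lB + card {j. j < n \<and> pb j} = n"
    using sum_length_filter_compl[of pb "[0..<n]"] card_filter_upt[of pb n]
    unfolding lB_def cB_def by simp
  define r where "r = n + lA + lB"
  have r: "r < 2 * n" unfolding r_def using lA lB card by linarith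
  have cAi: "\<And>k. k < lA \<Longrightarrow> cA ! k < n \<and> \<not> pa (cA ! k)"
    unfolding lA_def cA_def using nth_mem by fastforce
  have cBi: "\<And>k. k < lB \<Longrightarrow> cB ! k < n \<and> \<not> pb (cB ! k)"
    unfolding lB_def cB_def using nth_mem by fastforce
  have cAall: "\<And>j. j < n \<Longrightarrow> \<not> pa j \<Longrightarrow> \<exists>k < lA. cA ! k = j"
    unfolding lA_def cA_def by (metis in_set_conv_nth atLeastLessThan_iff mem_Collect_eq set_filter set_upt zero_le)
  have cBall: "\<And>j. j < n \<Longrightarrow> \<not> pb j \<Longrightarrow> \<exists>k < lB. cB ! k = j"
    unfolding lB_def cB_def by (metis in_set_conv_nth atLeastLessThan_iff mem_Collect_eq set_filter set_upt zero_le)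
  define f where "f = (\<lambda>(i,j). if i < n then (if j < n then P $$ (i,j) else - Q $$ (i, j - n))
      else if i < n + lA then (if j = cA ! (i - n) then 1 else 0)
      else (if j = n + cB ! (i - n - lA) then 1 else (0::real)))"
  define C where "C = mat r (2 * n) f"
  have C: "C \<in> carrier_mat r (2 * n)" unfolding C_def by simp
  obtain z where z: "z \<in> carrier_vec (2 * n)" and z0: "z \<noteq> 0\<^sub>v (2 * n)" and Cz: "C *\<^sub>v z = 0\<^sub>v r"
    using kernel_exists[OF C r] by auto
  have row: "\<And>i. i < r \<Longrightarrow> (\<Sum>j = 0..<2 * n. f (i,j) * z $ j) = 0"
  proof -
    fix i assume i: "i < r"
    have "(C *\<^sub>v z) $ i = 0" using Cz i by simp
    moreover have "(C *\<^sub>v z) $ i = (\<Sum>j = 0..<2 * n. f (i,j) * z $ j)"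
      using i z unfolding C_def by (auto simp: scalar_prod_def row_def intro!: sum.cong)
    ultimately show "(\<Sum>j = 0..<2 * n. f (i,j) * z $ j) = 0" by simp
  qed
  define a where "a = vec n (\<lambda>j. z $ j)"
  define b where "b = vec n (\<lambda>j. z $ (n + j))"
  have a: "a \<in> carrier_vec n" and b: "b \<in> carrier_vec n" unfolding a_def b_def by auto
  have split: "\<And>g :: nat \<Rightarrow> real. (\<Sum>j = 0..<2 * n. g j) = (\<Sum>j = 0..<n. g j) + (\<Sum>j = 0..<n. g (j + n))"
  proof -
    fix g :: "nat \<Rightarrow> real"
    have "(\<Sum>j = 0..<2 * n. g j) = (\<Sum>j = 0..<n. g j) + (\<Sum>j = n..<2 * n. g j)"
      by (rule sum.atLeastLessThan_concat[symmetric]) auto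
    also have "(\<Sum>j = n..<2 * n. g j) = (\<Sum>j = 0..<n. g (j + n))"
      using sum.shift_bounds_nat_ivl[of g 0 n n] by (simp add: mult_2)
    finally show "(\<Sum>j = 0..<2 * n. g j) = (\<Sum>j = 0..<n. g j) + (\<Sum>j = 0..<n. g (j + n))" .
  qed
  have PQ: "P *\<^sub>v a = Q *\<^sub>v b"
  proof (rule eq_vecI)
    fix i assume "i < dim_vec (Q *\<^sub>v b)"
    hence i: "i < n" using Q by simp
    have "0 = (\<Sum>j = 0..<2 * n. f (i,j) * z $ j)" using row[of i] i unfolding r_def by simp
    also have "\<dots> = (\<Sum>j = 0..<n. P $$ (i,j) * z $ j) + (\<Sum>j = 0..<n. - Q $$ (i,j) * z $ (j + n))"
      unfolding split using i by (simp add: f_def)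
    also have "(\<Sum>j = 0..<n. P $$ (i,j) * z $ j) = (P *\<^sub>v a) $ i"
      using P i unfolding a_def by (auto simp: scalar_prod_def row_def intro!: sum.cong)
    also have "(\<Sum>j = 0..<n. - Q $$ (i,j) * z $ (j + n)) = - (Q *\<^sub>v b) $ i"
      using Q i unfolding b_def by (auto simp: scalar_prod_def row_def sum_negf add.commute intro!: sum.cong)
    finally show "(P *\<^sub>v a) $ i = (Q *\<^sub>v b) $ i" by simp
  qed (use P Q in simp)
  have azero: "\<forall>j<n. \<not> pa j \<longrightarrow> a $ j = 0"
  proof (intro allI impI)
    fix j assume j: "j < n" and npa: "\<not> pa j"
    obtain k where k: "k < lA" and kj: "cA ! k = j" using cAall[OF j npa] by auto
    have "0 = (\<Sum>l = 0..<2 * n. f (n + k, l) * z $ l)" using row[of "n + k"] k unfolding r_def by simp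
    also have "\<dots> = (\<Sum>l = 0..<2 * n. (if j = l then 1 else 0) * z $ l)"
      using k kj by (intro sum.cong) (auto simp: f_def)
    also have "\<dots> = z $ j" using j by (intro delta_sum1) simp
    finally show "a $ j = 0" unfolding a_def using j by simp
  qed
  have bzero: "\<forall>j<n. \<not> pb j \<longrightarrow> b $ j = 0"
  proof (intro allI impI)
    fix j assume j: "j < n" and npb: "\<not> pb j"
    obtain k where k: "k < lB" and kj: "cB ! k = j" using cBall[OF j npb] by auto
    have "0 = (\<Sum>l = 0..<2 * n. f (n + lA + k, l) * z $ l)" using row[of "n + lA + k"] k unfolding r_def by simp
    also have "\<dots> = (\<Sum>l = 0..<2 * n. (if n + j = l then 1 else 0) * z $ l)"
      using k kj by (intro sum.cong) (auto simp: f_def)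
    also have "\<dots> = z $ (n + j)" using j by (intro delta_sum1) simp
    finally show "b $ j = 0" unfolding b_def using j by simp
  qed
  have "a \<noteq> 0\<^sub>v n \<or> b \<noteq> 0\<^sub>v n"
  proof (rule ccontr)
    assume "\<not> (a \<noteq> 0\<^sub>v n \<or> b \<noteq> 0\<^sub>v n)"
    hence ab: "a = 0\<^sub>v n" "b = 0\<^sub>v n" by auto
    have "z = 0\<^sub>v (2 * n)"
    proof (rule eq_vecI)
      fix l assume "l < dim_vec (0\<^sub>v (2 * n))"
      hence l: "l < 2 * n" by simp
      show "z $ l = 0\<^sub>v (2 * n) $ l"
      proof (cases "l < n")
        case True
        thus ?thesis using arg_cong[OF ab(1), of "\<lambda>v. v $ l"] l unfolding a_def by simp
      next
        case False
        hence "l - n < n" using l by simp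
        thus ?thesis using arg_cong[OF ab(2), of "\<lambda>v. v $ (l - n)"] l False unfolding b_def by simp
      qed
    qed (use z in simp)
    thus False using z0 by simp
  qed
  thus ?thesis using a b azero bzero PQ by blast
qed


lemma filter_len_sort: "length (filter P (sort xs)) = length (filter P (xs :: real list))"
  by (simp add: filter_sort)

lemma count_sorted:
  fixes xs :: "real list"
  assumes len: "length xs = n" and i: "1 \<le> i" "i \<le> n"
  shows "i \<le> card {j. j < n \<and> xs ! j \<le> sort xs ! (i - 1)}"
    and "n - i + 1 \<le> card {j. j < n \<and> xs ! j \<ge> sort xs ! (i - 1)}"
proof -
  let ?s = "sort xs" and ?t = "sort xs ! (i - 1)"
  have ls: "length ?s = n" using len by simp
  have so: "sorted ?s" by simp
  have c1: "card {j. j < n \<and> xs ! j \<le> ?t} = card {k. k < n \<and> ?s ! k \<le> ?t}"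
    using length_filter_conv_card[of "\<lambda>x. x \<le> ?t" xs] length_filter_conv_card[of "\<lambda>x. x \<le> ?t" ?s]
      filter_len_sort[of "\<lambda>x. x \<le> ?t" xs] len ls by simp
  have "{k. k < i} \<subseteq> {k. k < n \<and> ?s ! k \<le> ?t}"
    using sorted_nth_mono[OF so] i ls by auto
  from card_mono[OF _ this] have "i \<le> card {k. k < n \<and> ?s ! k \<le> ?t}" by simp
  thus "i \<le> card {j. j < n \<and> xs ! j \<le> ?t}" using c1 by simp
  have c2: "card {j. j < n \<and> xs ! j \<ge> ?t} = card {k. k < n \<and> ?s ! k \<ge> ?t}"
    using length_filter_conv_card[of "\<lambda>x. x \<ge> ?t" xs] length_filter_conv_card[of "\<lambda>x. x \<ge> ?t" ?s]
      filter_len_sort[of "\<lambda>x. x \<ge> ?t" xs] len ls by simp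
  have "{i - 1..<n} \<subseteq> {k. k < n \<and> ?s ! k \<ge> ?t}"
    using sorted_nth_mono[OF so] i ls by auto
  from card_mono[OF _ this] have "n - i + 1 \<le> card {k. k < n \<and> ?s ! k \<ge> ?t}" using i by simp
  thus "n - i + 1 \<le> card {j. j < n \<and> xs ! j \<ge> ?t}" using c2 by simp
qed


lemma gen_eig_diag:
  fixes K M P :: "real mat"
  assumes K: "K \<in> carrier_mat n n" and M: "M \<in> carrier_mat n n" and P: "P \<in> carrier_mat n n"
    and PM: "transpose_mat P * M * P = 1\<^sub>m n" and PK: "transpose_mat P * K * P = diagm n \<mu>"
  shows "gen_eig K M i = sort (map \<mu> [0..<n]) ! (i - 1)"
  unfolding gen_eig_def gcp_roots[OF K M P PM PK] sorted_list_of_multiset_mset ..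

lemma pd_col_pos:
  fixes K M P :: "real mat"
  assumes K: "pd_mat n K" and M: "M \<in> carrier_mat n n" and P: "P \<in> carrier_mat n n"
    and PM: "transpose_mat P * M * P = 1\<^sub>m n" and PK: "transpose_mat P * K * P = diagm n \<mu>"
    and j: "j < n"
  shows "\<mu> j > 0"
proof -
  have Kc: "K \<in> carrier_mat n n" using K unfolding pd_mat_def by auto
  have "col P j \<bullet> (M *\<^sub>v col P j) = 1" using sandwich_entry[OF P M j j] PM j by simp
  hence nz: "col P j \<noteq> 0\<^sub>v n" using M by auto
  have cP: "col P j \<in> carrier_vec n" unfolding carrier_vec_def using P by simp
  have "\<mu> j = col P j \<bullet> (K *\<^sub>v col P j)" using sandwich_entry[OF P Kc j j] PK j
    by (simp add: diagm_def)
  also have "\<dots> > 0" using K nz cP unfolding pd_mat_def by auto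
  finally show ?thesis .
qed

lemma eig_compare:
  fixes K M1 M2 :: "real mat"
  assumes K: "pd_mat n K" and M1: "pd_mat n M1" and M2: "pd_mat n M2" and c: "c \<ge> 0"
    and quad: "\<And>x. x \<in> carrier_vec n \<Longrightarrow> x \<bullet> (M1 *\<^sub>v x) \<le> c * (x \<bullet> (M2 *\<^sub>v x))"
    and i: "1 \<le> i" "i \<le> n"
  shows "gen_eig K M2 i \<le> c * gen_eig K M1 i \<and> gen_eig K M1 i > 0"
proof -
  have Kc: "K \<in> carrier_mat n n" and symK: "sym_mat K"
    and Kpos: "\<And>x. x \<in> carrier_vec n \<Longrightarrow> x \<noteq> 0\<^sub>v n \<Longrightarrow> x \<bullet> (K *\<^sub>v x) > 0"
    using K unfolding pd_mat_def by auto
  have M1c: "M1 \<in> carrier_mat n n" using M1 unfolding pd_mat_def by auto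
  have M2c: "M2 \<in> carrier_mat n n"
    and M2pos: "\<And>x. x \<in> carrier_vec n \<Longrightarrow> x \<noteq> 0\<^sub>v n \<Longrightarrow> x \<bullet> (M2 *\<^sub>v x) > 0"
    using M2 unfolding pd_mat_def by auto
  obtain P \<mu> where P: "P \<in> carrier_mat n n" and PM: "transpose_mat P * M1 * P = 1\<^sub>m n"
    and PK: "transpose_mat P * K * P = diagm n \<mu>" using simdiag[OF Kc symK M1] by auto
  obtain Q \<nu> where Q: "Q \<in> carrier_mat n n" and QM: "transpose_mat Q * M2 * Q = 1\<^sub>m n"
    and QK: "transpose_mat Q * K * Q = diagm n \<nu>" using simdiag[OF Kc symK M2] by auto
  define t1 where "t1 = gen_eig K M1 i"
  define t2 where "t2 = gen_eig K M2 i"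
  have t1: "t1 = sort (map \<mu> [0..<n]) ! (i - 1)" unfolding t1_def by (rule gen_eig_diag[OF Kc M1c P PM PK])
  have t2: "t2 = sort (map \<nu> [0..<n]) ! (i - 1)" unfolding t2_def by (rule gen_eig_diag[OF Kc M2c Q QM QK])
  have t1pos: "t1 > 0"
  proof -
    have "t1 \<in> set (sort (map \<mu> [0..<n]))" unfolding t1 using i by (intro nth_mem) simp
    then obtain j where j: "j < n" and tj: "t1 = \<mu> j" by auto
    show ?thesis unfolding tj by (rule pd_col_pos[OF K M1c P PM PK j])
  qed
  have cnt1: "i \<le> card {j. j < n \<and> \<mu> j \<le> t1}"
  proof -
    have "i \<le> card {j. j < n \<and> map \<mu> [0..<n] ! j \<le> t1}"
      unfolding t1 by (rule count_sorted(1)) (use i in auto)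
    also have "{j. j < n \<and> map \<mu> [0..<n] ! j \<le> t1} = {j. j < n \<and> \<mu> j \<le> t1}" by auto
    finally show ?thesis .
  qed
  have cnt2: "n - i + 1 \<le> card {j. j < n \<and> \<nu> j \<ge> t2}"
  proof -
    have "n - i + 1 \<le> card {j. j < n \<and> map \<nu> [0..<n] ! j \<ge> t2}"
      unfolding t2 by (rule count_sorted(2)) (use i in auto)
    also have "{j. j < n \<and> map \<nu> [0..<n] ! j \<ge> t2} = {j. j < n \<and> \<nu> j \<ge> t2}" by auto
    finally show ?thesis .
  qed
  have "card {j. j < n \<and> \<mu> j \<le> t1} + card {j. j < n \<and> \<nu> j \<ge> t2} > n"
    using cnt1 cnt2 i by linarith
  from two_span[OF P Q this] obtain a b where a: "a \<in> carrier_vec n" and b: "b \<in> carrier_vec n"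
    and az: "\<forall>j<n. \<not> \<mu> j \<le> t1 \<longrightarrow> a $ j = 0" and bz: "\<forall>j<n. \<not> \<nu> j \<ge> t2 \<longrightarrow> b $ j = 0"
    and PQ: "P *\<^sub>v a = Q *\<^sub>v b" and ab: "a \<noteq> 0\<^sub>v n \<or> b \<noteq> 0\<^sub>v n" by blast
  define x where "x = P *\<^sub>v a"
  have x: "x \<in> carrier_vec n" unfolding x_def using P a by simp
  have inv: "\<And>(R::real mat) M v. R \<in> carrier_mat n n \<Longrightarrow> M \<in> carrier_mat n n \<Longrightarrow> v \<in> carrier_vec n \<Longrightarrow>
      transpose_mat R * M * R = 1\<^sub>m n \<Longrightarrow> R *\<^sub>v v = 0\<^sub>v n \<Longrightarrow> v = 0\<^sub>v n"
  proof -
    fix R M :: "real mat" and v assume R: "R \<in> carrier_mat n n" and M: "M \<in> carrier_mat n n"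
      and v: "v \<in> carrier_vec n" and RM: "transpose_mat R * M * R = 1\<^sub>m n" and Rv: "R *\<^sub>v v = 0\<^sub>v n"
    have "v = (transpose_mat R * M * R) *\<^sub>v v" unfolding RM using v by simp
    also have "\<dots> = (transpose_mat R * M) *\<^sub>v (R *\<^sub>v v)"
      by (rule assoc_mult_mat_vec[of _ n n]) (use R M v in auto)
    also have "\<dots> = 0\<^sub>v n" unfolding Rv using R M by (intro eq_vecI) (auto simp: scalar_prod_def)
    finally show "v = 0\<^sub>v n" .
  qed
  have xnz: "x \<noteq> 0\<^sub>v n"
  proof
    assume x0: "x = 0\<^sub>v n"
    have "a = 0\<^sub>v n" using inv[OF P M1c a PM] x0 unfolding x_def by simp
    moreover have "b = 0\<^sub>v n" using inv[OF Q M2c b QM] x0 PQ unfolding x_def by simp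
    ultimately show False using ab by simp
  qed
  have one_qf: "\<And>v :: real vec. v \<in> carrier_vec n \<Longrightarrow> v \<bullet> (1\<^sub>m n *\<^sub>v v) = (\<Sum>j = 0..<n. (v $ j)^2)"
  proof -
    fix v :: "real vec" assume v: "v \<in> carrier_vec n"
    show "v \<bullet> (1\<^sub>m n *\<^sub>v v) = (\<Sum>j = 0..<n. (v $ j)^2)"
      using qf_diagm[OF v, of "\<lambda>_. 1"] unfolding diagm_one by simp
  qed
  have xM1: "x \<bullet> (M1 *\<^sub>v x) = (\<Sum>j = 0..<n. (a $ j)^2)"
    unfolding x_def qf_sandwich[OF P M1c a] PM using one_qf[OF a] .
  have xM2: "x \<bullet> (M2 *\<^sub>v x) = (\<Sum>j = 0..<n. (b $ j)^2)"
    unfolding x_def PQ qf_sandwich[OF Q M2c b] QM using one_qf[OF b] .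
  have "x \<bullet> (K *\<^sub>v x) = (\<Sum>j = 0..<n. \<mu> j * (a $ j)^2)"
    unfolding x_def qf_sandwich[OF P Kc a] PK using qf_diagm[OF a] .
  also have "\<dots> \<le> (\<Sum>j = 0..<n. t1 * (a $ j)^2)"
  proof (rule sum_mono)
    fix j assume "j \<in> {0..<n}"
    hence j: "j < n" by simp
    show "\<mu> j * (a $ j)^2 \<le> t1 * (a $ j)^2"
      using az j by (cases "\<mu> j \<le> t1") (auto intro: mult_right_mono)
  qed
  also have "\<dots> = t1 * (x \<bullet> (M1 *\<^sub>v x))" unfolding xM1 by (simp add: sum_distrib_left)
  finally have up: "x \<bullet> (K *\<^sub>v x) \<le> t1 * (x \<bullet> (M1 *\<^sub>v x))" .
  have "t2 * (x \<bullet> (M2 *\<^sub>v x)) = (\<Sum>j = 0..<n. t2 * (b $ j)^2)" unfolding xM2 by (simp add: sum_distrib_left)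
  also have "\<dots> \<le> (\<Sum>j = 0..<n. \<nu> j * (b $ j)^2)"
  proof (rule sum_mono)
    fix j assume "j \<in> {0..<n}"
    hence j: "j < n" by simp
    show "t2 * (b $ j)^2 \<le> \<nu> j * (b $ j)^2"
      using bz j by (cases "\<nu> j \<ge> t2") (auto intro: mult_right_mono)
  qed
  also have "\<dots> = x \<bullet> (K *\<^sub>v x)"
    unfolding x_def PQ qf_sandwich[OF Q Kc b] QK using qf_diagm[OF b] by simp
  finally have low: "t2 * (x \<bullet> (M2 *\<^sub>v x)) \<le> x \<bullet> (K *\<^sub>v x)" .
  have "t1 * (x \<bullet> (M1 *\<^sub>v x)) \<le> t1 * (c * (x \<bullet> (M2 *\<^sub>v x)))"
    using quad[OF x] t1pos by (intro mult_left_mono) auto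
  with up low have "t2 * (x \<bullet> (M2 *\<^sub>v x)) \<le> (c * t1) * (x \<bullet> (M2 *\<^sub>v x))" by (simp add: mult_ac)
  moreover have "x \<bullet> (M2 *\<^sub>v x) > 0" by (rule M2pos[OF x xnz])
  ultimately have "t2 \<le> c * t1" by simp
  thus ?thesis using t1pos unfolding t1_def t2_def by simp
qed



lemma qf_expand:
  fixes B :: "real mat"
  assumes B: "B \<in> carrier_mat n n" and x: "x \<in> carrier_vec n"
  shows "x \<bullet> (B *\<^sub>v x) = (\<Sum>i = 0..<n. \<Sum>j = 0..<n. x$i * B$$(i,j) * x$j)"
  using B x by (auto simp: scalar_prod_def mult_mat_vec_def row_def sum_distrib_left mult.assoc intro!: sum.cong)

lemma qf_sandwich2:
  fixes P A :: "real mat"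
  assumes P: "P \<in> carrier_mat m n" and A: "A \<in> carrier_mat m m" and x: "x \<in> carrier_vec n"
  shows "x \<bullet> ((transpose_mat P * A * P) *\<^sub>v x) = (P *\<^sub>v x) \<bullet> (A *\<^sub>v (P *\<^sub>v x))"
proof -
  have "(transpose_mat P * A * P) *\<^sub>v x = (transpose_mat P * A) *\<^sub>v (P *\<^sub>v x)"
    by (rule assoc_mult_mat_vec[of _ n m]) (use P A x in auto)
  also have "\<dots> = transpose_mat P *\<^sub>v (A *\<^sub>v (P *\<^sub>v x))"
    by (rule assoc_mult_mat_vec[of _ n m]) (use P A x in auto)
  finally have e: "(transpose_mat P * A * P) *\<^sub>v x = transpose_mat P *\<^sub>v (A *\<^sub>v (P *\<^sub>v x))" .
  have "x \<bullet> ((transpose_mat P * A * P) *\<^sub>v x) = (transpose_mat P *\<^sub>v (A *\<^sub>v (P *\<^sub>v x))) \<bullet> x"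
    unfolding e using P A x by (simp add: comm_scalar_prod[of _ n])
  also have "\<dots> = (A *\<^sub>v (P *\<^sub>v x)) \<bullet> (P *\<^sub>v x)"
    by (rule transpose_vec_mult_scalar[OF P x]) (use P A x in simp)
  also have "\<dots> = (P *\<^sub>v x) \<bullet> (A *\<^sub>v (P *\<^sub>v x))" using P A x by (simp add: comm_scalar_prod[of _ m])
  finally show ?thesis .
qed

lemma qf_assemble:
  fixes L A :: "nat \<Rightarrow> real mat"
  assumes L: "\<And>e. e < N \<Longrightarrow> L e \<in> carrier_mat m n" and A: "\<And>e. e < N \<Longrightarrow> A e \<in> carrier_mat m m"
    and x: "x \<in> carrier_vec n"
  shows "x \<bullet> (assemble n N L A *\<^sub>v x) = (\<Sum>e<N. (L e *\<^sub>v x) \<bullet> (A e *\<^sub>v (L e *\<^sub>v x)))"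
proof -
  have Bc: "\<And>e. e < N \<Longrightarrow> transpose_mat (L e) * A e * L e \<in> carrier_mat n n"
    using L A by (meson mult_carrier_mat transpose_carrier_mat)
  have "x \<bullet> (assemble n N L A *\<^sub>v x) =
     (\<Sum>i = 0..<n. \<Sum>j = 0..<n. x$i * assemble n N L A $$ (i,j) * x$j)"
    by (rule qf_expand[OF _ x]) (simp add: assemble_def)
  also have "\<dots> = (\<Sum>i = 0..<n. \<Sum>j = 0..<n. \<Sum>e<N. x$i * (transpose_mat (L e) * A e * L e) $$ (i,j) * x$j)"
    by (auto simp: assemble_def sum_distrib_left sum_distrib_right intro!: sum.cong)
  also have "\<dots> = (\<Sum>i = 0..<n. \<Sum>e<N. \<Sum>j = 0..<n. x$i * (transpose_mat (L e) * A e * L e) $$ (i,j) * x$j)"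
    by (intro sum.cong refl sum.swap)
  also have "\<dots> = (\<Sum>e<N. \<Sum>i = 0..<n. \<Sum>j = 0..<n. x$i * (transpose_mat (L e) * A e * L e) $$ (i,j) * x$j)"
    by (rule sum.swap)
  also have "\<dots> = (\<Sum>e<N. x \<bullet> ((transpose_mat (L e) * A e * L e) *\<^sub>v x))"
  proof (rule sum.cong[OF refl])
    fix e assume "e \<in> {..<N}"
    hence e: "e < N" by simp
    show "(\<Sum>i = 0..<n. \<Sum>j = 0..<n. x$i * (transpose_mat (L e) * A e * L e) $$ (i,j) * x$j)
      = x \<bullet> ((transpose_mat (L e) * A e * L e) *\<^sub>v x)"
      by (rule qf_expand[symmetric, OF Bc[OF e] x])
  qed
  also have "\<dots> = (\<Sum>e<N. (L e *\<^sub>v x) \<bullet> (A e *\<^sub>v (L e *\<^sub>v x)))"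
  proof (rule sum.cong[OF refl])
    fix e assume "e \<in> {..<N}"
    hence e: "e < N" by simp
    show "x \<bullet> ((transpose_mat (L e) * A e * L e) *\<^sub>v x) = (L e *\<^sub>v x) \<bullet> (A e *\<^sub>v (L e *\<^sub>v x))"
      by (rule qf_sandwich2[OF L[OF e] A[OF e] x])
  qed
  finally show ?thesis .
qed

lemma sym_assemble:
  fixes L A :: "nat \<Rightarrow> real mat"
  assumes L: "\<And>e. e < N \<Longrightarrow> L e \<in> carrier_mat m n" and A: "\<And>e. e < N \<Longrightarrow> A e \<in> carrier_mat m m"
    and symA: "\<And>e. e < N \<Longrightarrow> sym_mat (A e)"
  shows "sym_mat (assemble n N L A)"
  unfolding sym_mat_def
proof (rule eq_matI)
  fix i j assume "i < dim_row (assemble n N L A)" "j < dim_col (assemble n N L A)"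
  hence ij: "i < n" "j < n" by (auto simp: assemble_def)
  have "\<And>e. e < N \<Longrightarrow> (transpose_mat (L e) * A e * L e) $$ (j,i) = (transpose_mat (L e) * A e * L e) $$ (i,j)"
  proof -
    fix e assume e: "e < N"
    have "(transpose_mat (L e) * A e * L e) $$ (j,i) = transpose_mat (transpose_mat (L e) * A e * L e) $$ (i,j)"
      using ij L[OF e] A[OF e] by simp
    also have "transpose_mat (transpose_mat (L e) * A e * L e) = transpose_mat (L e) * A e * L e"
      unfolding transpose_sandwich[OF L[OF e] A[OF e]] using symA[OF e] unfolding sym_mat_def by simp
    finally show "(transpose_mat (L e) * A e * L e) $$ (j,i) = (transpose_mat (L e) * A e * L e) $$ (i,j)" .
  qed
  thus "transpose_mat (assemble n N L A) $$ (i, j) = assemble n N L A $$ (i, j)"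
    using ij by (simp add: assemble_def)
qed (auto simp: assemble_def)



lemma smult_mat_vec:
  fixes B :: "real mat"
  assumes B: "B \<in> carrier_mat m m" and y: "y \<in> carrier_vec m"
  shows "(a \<cdot>\<^sub>m B) *\<^sub>v y = a \<cdot>\<^sub>v (B *\<^sub>v y)"
  by (rule eq_vecI) (use B y in \<open>auto simp: smult_scalar_prod_distrib[of _ m]\<close>)

lemma bessel:
  fixes Me U :: "real mat" and y :: "real vec" and \<alpha> :: real
  assumes Me: "pd_mat m Me" and U: "U \<in> carrier_mat m r" and orth: "transpose_mat U * Me * U = 1\<^sub>m r"
    and y: "y \<in> carrier_vec m" and al: "\<alpha> \<ge> 0"
  defines "V \<equiv> Me * U"
  defines "Mb \<equiv> Me + \<alpha> \<cdot>\<^sub>m (V * transpose_mat V)"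
  shows "y \<bullet> (Me *\<^sub>v y) \<le> y \<bullet> (Mb *\<^sub>v y) \<and> y \<bullet> (Mb *\<^sub>v y) \<le> (1 + \<alpha>) * (y \<bullet> (Me *\<^sub>v y))"
proof -
  have Mc: "Me \<in> carrier_mat m m" and symM: "transpose_mat Me = Me"
    and Mpos: "\<And>x. x \<in> carrier_vec m \<Longrightarrow> x \<noteq> 0\<^sub>v m \<Longrightarrow> x \<bullet> (Me *\<^sub>v x) > 0"
    using Me unfolding pd_mat_def sym_mat_def by auto
  have Mpsd: "\<And>x. x \<in> carrier_vec m \<Longrightarrow> x \<bullet> (Me *\<^sub>v x) \<ge> 0"
  proof -
    fix x :: "real vec" assume x: "x \<in> carrier_vec m"
    show "x \<bullet> (Me *\<^sub>v x) \<ge> 0"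
    proof (cases "x = 0\<^sub>v m")
      case True thus ?thesis using Mc by simp
    next
      case False thus ?thesis using Mpos[OF x] by fastforce
    qed
  qed
  have V: "V \<in> carrier_mat m r" unfolding V_def using Mc U by simp
  have Vt: "transpose_mat V = transpose_mat U * Me"
    unfolding V_def using transpose_mult[OF Mc U] symM by simp
  define c where "c = transpose_mat V *\<^sub>v y"
  have c: "c \<in> carrier_vec r" unfolding c_def using V y by simp
  have c2: "c = transpose_mat U *\<^sub>v (Me *\<^sub>v y)" unfolding c_def Vt
    by (rule assoc_mult_mat_vec[of _ r m]) (use U Mc y in auto)
  have VVt: "V * transpose_mat V \<in> carrier_mat m m" using V by simp
  have qVV: "y \<bullet> ((V * transpose_mat V) *\<^sub>v y) = c \<bullet> c"
  proof -
    have "(V * transpose_mat V) *\<^sub>v y = V *\<^sub>v c" unfolding c_def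
      by (rule assoc_mult_mat_vec[of _ m r]) (use V y in auto)
    hence "y \<bullet> ((V * transpose_mat V) *\<^sub>v y) = y \<bullet> (V *\<^sub>v c)" by simp
    also have "\<dots> = c \<bullet> c" unfolding c_def
      by (rule transpose_vec_mult_scalar[OF V c y, symmetric, unfolded c_def])
    finally show ?thesis .
  qed
  have qMb: "y \<bullet> (Mb *\<^sub>v y) = y \<bullet> (Me *\<^sub>v y) + \<alpha> * (c \<bullet> c)"
  proof -
    have "Mb *\<^sub>v y = Me *\<^sub>v y + (\<alpha> \<cdot>\<^sub>m (V * transpose_mat V)) *\<^sub>v y"
      unfolding Mb_def by (rule add_mult_distrib_mat_vec) (use Mc VVt y in auto)
    also have "(\<alpha> \<cdot>\<^sub>m (V * transpose_mat V)) *\<^sub>v y = \<alpha> \<cdot>\<^sub>v ((V * transpose_mat V) *\<^sub>v y)"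
      by (rule smult_mat_vec[OF VVt y])
    finally have "Mb *\<^sub>v y = Me *\<^sub>v y + \<alpha> \<cdot>\<^sub>v ((V * transpose_mat V) *\<^sub>v y)" .
    hence "y \<bullet> (Mb *\<^sub>v y) = y \<bullet> (Me *\<^sub>v y) + y \<bullet> (\<alpha> \<cdot>\<^sub>v ((V * transpose_mat V) *\<^sub>v y))"
      using y Mc VVt by (simp add: scalar_prod_add_distrib[of _ m])
    also have "y \<bullet> (\<alpha> \<cdot>\<^sub>v ((V * transpose_mat V) *\<^sub>v y)) = \<alpha> * (y \<bullet> ((V * transpose_mat V) *\<^sub>v y))"
      using y VVt by (simp add: scalar_prod_smult_distrib[of _ m])
    finally show ?thesis unfolding qVV .
  qed
  have cc0: "c \<bullet> c \<ge> 0" unfolding scalar_prod_def by (auto intro!: sum_nonneg)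
  define u where "u = U *\<^sub>v c"
  have u: "u \<in> carrier_vec m" unfolding u_def using U c by simp
  have My: "Me *\<^sub>v y \<in> carrier_vec m" using Mc y by simp
  have Mu: "Me *\<^sub>v u \<in> carrier_vec m" using Mc u by simp
  have uMy: "u \<bullet> (Me *\<^sub>v y) = c \<bullet> c"
  proof -
    have "(transpose_mat U *\<^sub>v (Me *\<^sub>v y)) \<bullet> c = (Me *\<^sub>v y) \<bullet> (U *\<^sub>v c)"
      by (rule transpose_vec_mult_scalar[OF U c My])
    thus ?thesis unfolding u_def c2[symmetric] using My U c by (simp add: comm_scalar_prod[of _ m])
  qed
  have yMu: "y \<bullet> (Me *\<^sub>v u) = c \<bullet> c"
  proof -
    have "(transpose_mat Me *\<^sub>v y) \<bullet> u = y \<bullet> (Me *\<^sub>v u)" by (rule transpose_vec_mult_scalar[OF Mc u y])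
    thus ?thesis using uMy symM My u by (simp add: comm_scalar_prod[of _ m])
  qed
  have uMu: "u \<bullet> (Me *\<^sub>v u) = c \<bullet> c"
    unfolding u_def qf_sandwich2[OF U Mc c, symmetric] orth using c by simp
  have "0 \<le> (y - u) \<bullet> (Me *\<^sub>v (y - u))" using Mpsd y u by simp
  also have "Me *\<^sub>v (y - u) = Me *\<^sub>v y - Me *\<^sub>v u" by (rule mult_minus_distrib_mat_vec[OF Mc y u])
  also have "(y - u) \<bullet> (Me *\<^sub>v y - Me *\<^sub>v u) = y \<bullet> (Me *\<^sub>v y - Me *\<^sub>v u) - u \<bullet> (Me *\<^sub>v y - Me *\<^sub>v u)"
    by (rule minus_scalar_prod_distrib) (use y u My Mu in auto)
  also have "\<dots> = y \<bullet> (Me *\<^sub>v y) - c \<bullet> c - (c \<bullet> c - c \<bullet> c)"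
    using y u My Mu yMu uMy uMu by (simp add: scalar_prod_minus_distrib[of _ m])
  finally have "c \<bullet> c \<le> y \<bullet> (Me *\<^sub>v y)" by simp
  with qMb cc0 al show ?thesis by (auto simp: algebra_simps intro: mult_left_mono)
qed

lemma Mb_sym:
  fixes Me U :: "real mat" and \<alpha> :: real
  assumes Me: "pd_mat m Me" and U: "U \<in> carrier_mat m r"
  shows "sym_mat (Me + \<alpha> \<cdot>\<^sub>m ((Me * U) * transpose_mat (Me * U)))"
    and "Me + \<alpha> \<cdot>\<^sub>m ((Me * U) * transpose_mat (Me * U)) \<in> carrier_mat m m"
proof -
  have Mc: "Me \<in> carrier_mat m m" and symM: "transpose_mat Me = Me"
    using Me unfolding pd_mat_def sym_mat_def by auto
  have V: "Me * U \<in> carrier_mat m r" using Mc U by simp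
  show "Me + \<alpha> \<cdot>\<^sub>m ((Me * U) * transpose_mat (Me * U)) \<in> carrier_mat m m" using Mc V by simp
  show "sym_mat (Me + \<alpha> \<cdot>\<^sub>m ((Me * U) * transpose_mat (Me * U)))"
    unfolding sym_mat_def
  proof (rule eq_matI)
    fix i j assume "i < dim_row (Me + \<alpha> \<cdot>\<^sub>m ((Me * U) * transpose_mat (Me * U)))"
      "j < dim_col (Me + \<alpha> \<cdot>\<^sub>m ((Me * U) * transpose_mat (Me * U)))"
    hence ij: "i < m" "j < m" using Mc V by auto
    have "Me $$ (j,i) = Me $$ (i,j)" using arg_cong[OF symM, of "\<lambda>A. A $$ (i,j)"] ij Mc by simp
    moreover have "row (Me * U) j \<bullet> row (Me * U) i = row (Me * U) i \<bullet> row (Me * U) j"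
      using V ij by (intro comm_scalar_prod[of _ r]) auto
    ultimately show "transpose_mat (Me + \<alpha> \<cdot>\<^sub>m ((Me * U) * transpose_mat (Me * U))) $$ (i, j) =
        (Me + \<alpha> \<cdot>\<^sub>m ((Me * U) * transpose_mat (Me * U))) $$ (i, j)"
      using ij Mc V by simp
  qed (use Mc V in auto)
qed



lemma restr_apply:
  fixes x :: "real vec"
  assumes r: "\<And>a. a < m \<Longrightarrow> idx a < n" and x: "x \<in> carrier_vec n" and a: "a < m"
  shows "(restr_mat m n idx *\<^sub>v x) $ a = x $ (idx a)"
proof -
  have "(restr_mat m n idx *\<^sub>v x) $ a = (\<Sum>b = 0..<n. (if b = idx a then 1 else 0) * x $ b)"
    using a x unfolding restr_mat_def by (auto simp: mult_mat_vec_def scalar_prod_def row_def intro!: sum.cong)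
  also have "\<dots> = x $ (idx a)" using delta_sum2[of "idx a" n "\<lambda>b. x $ b"] r[OF a] by simp
  finally show ?thesis .
qed

theorem mainTheorem3:
  fixes n m N r :: nat and \<alpha> :: real
    and idx :: "nat \<Rightarrow> nat \<Rightarrow> nat"
    and Ke Me U :: "nat \<Rightarrow> real mat"
  defines "L \<equiv> (\<lambda>e. restr_mat m n (idx e))"
  defines "V \<equiv> (\<lambda>e. Me e * U e)"
  defines "Mbar_e \<equiv> (\<lambda>e. Me e + \<alpha> \<cdot>\<^sub>m (V e * transpose_mat (V e)))"
  defines "K \<equiv> assemble n N L Ke"
  defines "M \<equiv> assemble n N L Me"
  defines "Mbar \<equiv> assemble n N L Mbar_e"
  assumes idx_inj: "\<And>e. e < N \<Longrightarrow> inj_on (idx e) {..<m}"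
    and idx_range: "\<And>e a. e < N \<Longrightarrow> a < m \<Longrightarrow> idx e a < n"
    and idx_cover: "\<And>i. i < n \<Longrightarrow> \<exists>e<N. \<exists>a<m. idx e a = i"
    and Ke_psd: "\<And>e. e < N \<Longrightarrow> psd_mat m (Ke e)"
    and K_pd: "pd_mat n K"
    and Me_pd: "\<And>e. e < N \<Longrightarrow> pd_mat m (Me e)"
    and r_pos: "0 < r" and r_lt: "r < m"
    and alpha_pos: "\<alpha> > 0"
    and U_carrier: "\<And>e. e < N \<Longrightarrow> U e \<in> carrier_mat m r"
    and U_orth: "\<And>e. e < N \<Longrightarrow> transpose_mat (U e) * Me e * U e = 1\<^sub>m r"
    and U_eig: "\<And>e j. e < N \<Longrightarrow> j < r \<Longrightarrow>
        Ke e *\<^sub>v col (U e) j = gen_eig (Ke e) (Me e) (m - r + 1 + j) \<cdot>\<^sub>v (Me e *\<^sub>v col (U e) j)"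
  shows "\<forall>i \<in> {1..n}.
     1 \<le> sqrt (gen_eig K M i) / sqrt (gen_eig K Mbar i) \<and>
     sqrt (gen_eig K M i) / sqrt (gen_eig K Mbar i) \<le> sqrt (1 + \<alpha>)"
proof -
  have Lc: "\<And>e. e < N \<Longrightarrow> L e \<in> carrier_mat m n" unfolding L_def restr_mat_def by simp
  have Mec: "\<And>e. e < N \<Longrightarrow> Me e \<in> carrier_mat m m" using Me_pd unfolding pd_mat_def by auto
  have Mbc: "\<And>e. e < N \<Longrightarrow> Mbar_e e \<in> carrier_mat m m"
    unfolding Mbar_e_def V_def using Mb_sym(2)[OF Me_pd U_carrier] by blast
  have Mpsd: "\<And>e y. e < N \<Longrightarrow> y \<in> carrier_vec m \<Longrightarrow> y \<bullet> (Me e *\<^sub>v y) \<ge> 0"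
  proof -
    fix e :: nat and y :: "real vec" assume e: "e < N" and y: "y \<in> carrier_vec m"
    show "y \<bullet> (Me e *\<^sub>v y) \<ge> 0"
    proof (cases "y = 0\<^sub>v m")
      case True thus ?thesis using Mec[OF e] by simp
    next
      case False thus ?thesis using Me_pd[OF e] y unfolding pd_mat_def by fastforce
    qed
  qed
  have Lx: "\<And>e x. e < N \<Longrightarrow> x \<in> carrier_vec n \<Longrightarrow> L e *\<^sub>v x \<in> carrier_vec m"
    using Lc by (meson mult_mat_vec_carrier)
  have qM: "\<And>x. x \<in> carrier_vec n \<Longrightarrow> x \<bullet> (M *\<^sub>v x) = (\<Sum>e<N. (L e *\<^sub>v x) \<bullet> (Me e *\<^sub>v (L e *\<^sub>v x)))"
    unfolding M_def by (rule qf_assemble[OF Lc Mec])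
  have qMb: "\<And>x. x \<in> carrier_vec n \<Longrightarrow> x \<bullet> (Mbar *\<^sub>v x) = (\<Sum>e<N. (L e *\<^sub>v x) \<bullet> (Mbar_e e *\<^sub>v (L e *\<^sub>v x)))"
    unfolding Mbar_def by (rule qf_assemble[OF Lc Mbc])
  have bnd: "\<And>x. x \<in> carrier_vec n \<Longrightarrow> x \<bullet> (M *\<^sub>v x) \<le> x \<bullet> (Mbar *\<^sub>v x) \<and>
      x \<bullet> (Mbar *\<^sub>v x) \<le> (1 + \<alpha>) * (x \<bullet> (M *\<^sub>v x))"
  proof -
    fix x :: "real vec" assume x: "x \<in> carrier_vec n"
    have b: "\<And>e. e \<in> {..<N} \<Longrightarrow> (L e *\<^sub>v x) \<bullet> (Me e *\<^sub>v (L e *\<^sub>v x)) \<le> (L e *\<^sub>v x) \<bullet> (Mbar_e e *\<^sub>v (L e *\<^sub>v x))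
       \<and> (L e *\<^sub>v x) \<bullet> (Mbar_e e *\<^sub>v (L e *\<^sub>v x)) \<le> (1 + \<alpha>) * ((L e *\<^sub>v x) \<bullet> (Me e *\<^sub>v (L e *\<^sub>v x)))"
    proof -
      fix e assume "e \<in> {..<N}"
      hence e: "e < N" by simp
      show "(L e *\<^sub>v x) \<bullet> (Me e *\<^sub>v (L e *\<^sub>v x)) \<le> (L e *\<^sub>v x) \<bullet> (Mbar_e e *\<^sub>v (L e *\<^sub>v x))
       \<and> (L e *\<^sub>v x) \<bullet> (Mbar_e e *\<^sub>v (L e *\<^sub>v x)) \<le> (1 + \<alpha>) * ((L e *\<^sub>v x) \<bullet> (Me e *\<^sub>v (L e *\<^sub>v x)))"
        unfolding Mbar_e_def V_def
        by (rule bessel[OF Me_pd[OF e] U_carrier[OF e] U_orth[OF e] Lx[OF e x]]) (use alpha_pos in simp)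
    qed
    have "x \<bullet> (M *\<^sub>v x) \<le> x \<bullet> (Mbar *\<^sub>v x)" unfolding qM[OF x] qMb[OF x]
      by (rule sum_mono) (use b in blast)
    moreover have "x \<bullet> (Mbar *\<^sub>v x) \<le> (1 + \<alpha>) * (x \<bullet> (M *\<^sub>v x))" unfolding qM[OF x] qMb[OF x]
      unfolding sum_distrib_left by (rule sum_mono) (use b in blast)
    ultimately show "x \<bullet> (M *\<^sub>v x) \<le> x \<bullet> (Mbar *\<^sub>v x) \<and> x \<bullet> (Mbar *\<^sub>v x) \<le> (1 + \<alpha>) * (x \<bullet> (M *\<^sub>v x))" ..
  qed
  have Mpos: "\<And>x. x \<in> carrier_vec n \<Longrightarrow> x \<noteq> 0\<^sub>v n \<Longrightarrow> x \<bullet> (M *\<^sub>v x) > 0"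
  proof -
    fix x :: "real vec" assume x: "x \<in> carrier_vec n" and nz: "x \<noteq> 0\<^sub>v n"
    obtain i where i: "i < n" and xi: "x $ i \<noteq> 0" using nz x by (metis eq_vecI carrier_vecD index_zero_vec)
    obtain e a where e: "e < N" and a: "a < m" and ea: "idx e a = i" using idx_cover[OF i] by blast
    have "(L e *\<^sub>v x) $ a = x $ i" unfolding L_def ea[symmetric]
      by (rule restr_apply[OF idx_range[OF e] x a])
    hence "L e *\<^sub>v x \<noteq> 0\<^sub>v m" using xi a by auto
    hence pos: "(L e *\<^sub>v x) \<bullet> (Me e *\<^sub>v (L e *\<^sub>v x)) > 0"
      using Me_pd[OF e] Lx[OF e x] unfolding pd_mat_def by auto
    show "x \<bullet> (M *\<^sub>v x) > 0" unfolding qM[OF x]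
      by (rule sum_pos2[of _ e]) (use e pos Mpsd Lx x in auto)
  qed
  have Mc: "M \<in> carrier_mat n n" unfolding M_def assemble_def by simp
  have Mbarc: "Mbar \<in> carrier_mat n n" unfolding Mbar_def assemble_def by simp
  have symM: "sym_mat M" unfolding M_def
    by (rule sym_assemble[OF Lc Mec]) (use Me_pd in \<open>auto simp: pd_mat_def\<close>)
  have symMb: "sym_mat Mbar" unfolding Mbar_def
  proof (rule sym_assemble[OF Lc Mbc])
    fix e assume e: "e < N"
    show "sym_mat (Mbar_e e)" unfolding Mbar_e_def V_def by (rule Mb_sym(1)[OF Me_pd[OF e] U_carrier[OF e]])
  qed
  have Mpd: "pd_mat n M" unfolding pd_mat_def using Mc symM Mpos by auto
  have Mbpd: "pd_mat n Mbar" unfolding pd_mat_def using Mbarc symMb Mpos bnd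
    by (auto intro: less_le_trans)
  show ?thesis
  proof
    fix i assume "i \<in> {1..n}"
    hence i: "1 \<le> i" "i \<le> n" by auto
    have c1: "gen_eig K Mbar i \<le> 1 * gen_eig K M i \<and> gen_eig K M i > 0"
      by (rule eig_compare[OF K_pd Mpd Mbpd _ _ i]) (use bnd in auto)
    have c2: "gen_eig K M i \<le> (1 + \<alpha>) * gen_eig K Mbar i \<and> gen_eig K Mbar i > 0"
      by (rule eig_compare[OF K_pd Mbpd Mpd _ _ i]) (use bnd alpha_pos in auto)
    define a where "a = gen_eig K M i"
    define b where "b = gen_eig K Mbar i"
    have ab: "b \<le> a" "a \<le> (1 + \<alpha>) * b" "b > 0" using c1 c2 unfolding a_def b_def by auto
    have sb: "sqrt b > 0" using ab by simp
    have "sqrt b \<le> sqrt a" using ab by simp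
    hence "1 \<le> sqrt a / sqrt b" using sb by simp
    moreover have "sqrt a \<le> sqrt (1 + \<alpha>) * sqrt b"
      using ab by (simp flip: real_sqrt_mult)
    hence "sqrt a / sqrt b \<le> sqrt (1 + \<alpha>)" using sb by (simp add: divide_simps)
    ultimately show "1 \<le> sqrt (gen_eig K M i) / sqrt (gen_eig K Mbar i) \<and>
      sqrt (gen_eig K M i) / sqrt (gen_eig K Mbar i) \<le> sqrt (1 + \<alpha>)"
      unfolding a_def b_def by simp
  qed
qed


end
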